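(* Let $n\ge2$, $m\ge0$, $p$, $q$ be fixed integers with $0\le p\le 2n-4$, $0\le q\le 2n-3$, $p+q\le 2n-3$. Then there is a polynomial $\alpha_{p,q}(j)$ in $j$ of degree at most $2(2n-3-p-q)+q-1$ (the zero polynomial if this number is negative) such that for every integer $j$ with $1\le j\le n-1$, the coefficient of $x^pz^q$ in $$(2x+m+z+1)_{j-1}\,(x+2z-j+2)_{j-1}\,(x+m+2j-z+2)_{2n-2j-2}\,(m+3j-3z)$$ equals $2^j\alpha_{p,q}(j)$.
   Context: $(a)_k:=a(a+1)\cdots(a+k-1)$ for $k\ge1$, $(a)_0:=1$; here $x,z$ are indeterminates. *)

theory Defs
  imports "HOL-Computational_Algebra.Polynomial"
begin

text \<open>Bivariate integer polynomials in x and z are encoded as \<open>int poly poly\<close>: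
  the outer variable is x, the inner (coefficient) variable is z.\<close>

definition varX :: "int poly poly" where
  "varX = [:0, 1:]"

definition varZ :: "int poly poly" where
  "varZ = [:[:0, 1:]:]"

definition cst :: "int \<Rightarrow> int poly poly" where
  "cst c = [:[:c:]:]"

definition coeffXZ :: "int poly poly \<Rightarrow> nat \<Rightarrow> nat \<Rightarrow> int" where
  "coeffXZ P p q = coeff (coeff P p) q"

definition prodA10 :: "nat \<Rightarrow> int \<Rightarrow> nat \<Rightarrow> int poly poly" where
  "prodA10 n m j =
     pochhammer (cst 2 * varX + cst m + varZ + cst 1) (j - 1)
   * pochhammer (varX + cst 2 * varZ - cst (int j) + cst 2) (j - 1)
   * pochhammer (varX + cst m + cst (2 * int j) - varZ + cst 2) (2 * n - 2 * j - 2)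
   * (cst m + cst (3 * int j) - cst 3 * varZ)"

end

theory Submission
  imports Defs
begin


definition lin :: "int \<Rightarrow> int \<Rightarrow> int \<Rightarrow> int poly poly" where
  "lin a b c = cst a * varX + cst b * varZ + cst c"
definition rlin :: "int \<Rightarrow> int \<Rightarrow> int \<Rightarrow> int poly poly" where
  "rlin a b c = cst a + cst b * varZ + cst c * varX"

lemma coeffXZ_add: "coeffXZ (P + Q) e q = coeffXZ P e q + coeffXZ Q e q"
  by (simp add: coeffXZ_def)

lemma coeffXZ_cst: "coeffXZ (X * cst a) e q = a * coeffXZ X e q"
  by (simp add: coeffXZ_def cst_def)

lemma coeffXZ_varX: "coeffXZ (X * (cst a * varX)) e q = (if e = 0 then 0 else a * coeffXZ X (e - 1) q)"
  by (cases e) (simp_all add: coeffXZ_def cst_def varX_def)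

lemma coeffXZ_varZ: "coeffXZ (X * (cst a * varZ)) e q = (if q = 0 then 0 else a * coeffXZ X e (q - 1))"
  by (cases q) (simp_all add: coeffXZ_def cst_def varZ_def)

lemma coeffXZ_lin: "coeffXZ (X * lin a b c) p q =
   (if p = 0 then 0 else a * coeffXZ X (p - 1) q) + (if q = 0 then 0 else b * coeffXZ X p (q - 1)) + c * coeffXZ X p q"
  by (simp add: lin_def distrib_left coeffXZ_add coeffXZ_cst coeffXZ_varX coeffXZ_varZ)

lemma coeffXZ_rlin: "coeffXZ (X * rlin a b c) e q =
   a * coeffXZ X e q + (if q = 0 then 0 else b * coeffXZ X e (q - 1)) + (if e = 0 then 0 else c * coeffXZ X (e - 1) q)"
  by (simp add: rlin_def distrib_left coeffXZ_add coeffXZ_cst coeffXZ_varX coeffXZ_varZ)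

lemma coeffXZ_one: "coeffXZ 1 e q = (if e = 0 \<and> q = 0 then 1 else 0)"
  by (cases e; cases q) (simp_all add: coeffXZ_def one_pCons)

definition revpair :: "nat \<Rightarrow> int poly poly \<Rightarrow> int poly poly \<Rightarrow> bool" where
  "revpair K P R \<longleftrightarrow> (\<forall>p q. p + q \<le> K \<longrightarrow> coeffXZ P p q = coeffXZ R (K - p - q) q)
     \<and> (\<forall>p q. K < p + q \<longrightarrow> coeffXZ P p q = 0) \<and> (\<forall>e q. K < e + q \<longrightarrow> coeffXZ R e q = 0)"

lemma revpair_one: "revpair 0 1 1"
  by (auto simp: revpair_def coeffXZ_one)

lemma revpair_step:
  assumes "revpair K P R"
  shows "revpair (Suc K) (P * lin a b c) (R * rlin a b c)"
proof -
  from assms have A: "\<And>p q. p + q \<le> K \<Longrightarrow> coeffXZ P p q = coeffXZ R (K - p - q) q"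
    and B: "\<And>p q. K < p + q \<Longrightarrow> coeffXZ P p q = 0"
    and C: "\<And>e q. K < e + q \<Longrightarrow> coeffXZ R e q = 0" by (auto simp: revpair_def)
  have i: "coeffXZ (P * lin a b c) p q = coeffXZ (R * rlin a b c) (Suc K - p - q) q" if "p + q \<le> Suc K" for p q
  proof -
    have t1: "(if p = 0 then 0 else a * coeffXZ P (p - 1) q) = a * coeffXZ R (Suc K - p - q) q"
      using that A[of "p - 1" q] C[of "Suc K - p - q" q] by (cases p) auto
    have t2: "(if q = 0 then 0 else b * coeffXZ P p (q - 1)) = (if q = 0 then 0 else b * coeffXZ R (Suc K - p - q) (q - 1))"
      using that A[of p "q - 1"] by (cases q) auto
    have t3: "c * coeffXZ P p q = (if Suc K - p - q = 0 then 0 else c * coeffXZ R (Suc K - p - q - 1) q)"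
      using that A[of p q] B[of p q] by (cases "p + q = Suc K") (auto simp: Suc_diff_le)
    show ?thesis unfolding coeffXZ_lin coeffXZ_rlin using t1 t2 t3 by simp
  qed
  have ii: "coeffXZ (P * lin a b c) p q = 0" if "Suc K < p + q" for p q
    proof -
    have "p \<noteq> 0 \<Longrightarrow> K < p - 1 + q" "q \<noteq> 0 \<Longrightarrow> K < p + (q - 1)" "K < p + q" using that by arith+
    then show ?thesis unfolding coeffXZ_lin using B by auto
  qed
  have iii: "coeffXZ (R * rlin a b c) e q = 0" if "Suc K < e + q" for e q
    proof -
    have "e \<noteq> 0 \<Longrightarrow> K < e - 1 + q" "q \<noteq> 0 \<Longrightarrow> K < e + (q - 1)" "K < e + q" using that by arith+
    then show ?thesis unfolding coeffXZ_rlin using C by auto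
  qed
  show ?thesis using i ii iii by (simp add: revpair_def)
qed

lemma revpair_prod:
  assumes "revpair K P R"
  shows "revpair (K + L) (P * (\<Prod>i<L. lin a b (f i))) (R * (\<Prod>i<L. rlin a b (f i)))"
  using assms
proof (induction L)
  case 0 then show ?case by simp
next
  case (Suc L)
  have "revpair (Suc (K + L)) (P * (\<Prod>i<L. lin a b (f i)) * lin a b (f L)) (R * (\<Prod>i<L. rlin a b (f i)) * rlin a b (f L))"
    by (rule revpair_step) (use Suc in simp)
  then show ?case by (simp add: mult.assoc)
qed



definition PD :: "nat \<Rightarrow> (nat \<Rightarrow> rat) \<Rightarrow> bool" where
  "PD d f \<longleftrightarrow> (\<exists>\<alpha>. degree \<alpha> \<le> d \<and> (\<forall>L. f L = poly \<alpha> (of_nat L)))"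

lemma PD_const: "PD d (\<lambda>_. c)"
  unfolding PD_def by (rule exI[of _ "[:c:]"]) simp

lemma PD_cong: "PD d f \<Longrightarrow> (\<And>L. f L = g L) \<Longrightarrow> PD d g"
  unfolding PD_def by simp

lemma PD_mono: "PD d f \<Longrightarrow> d \<le> d' \<Longrightarrow> PD d' f"
  unfolding PD_def using order.trans by blast

lemma PD_add: "PD d f \<Longrightarrow> PD d g \<Longrightarrow> PD d (\<lambda>L. f L + g L)"
  unfolding PD_def
proof (elim exE conjE)
  fix a b assume "degree a \<le> d" "\<forall>L. f L = poly a (of_nat L)" "degree b \<le> d" "\<forall>L. g L = poly b (of_nat L)"
  then show "\<exists>\<alpha>. degree \<alpha> \<le> d \<and> (\<forall>L. f L + g L = poly \<alpha> (of_nat L))"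
    by (intro exI[of _ "a + b"]) (auto intro: order.trans[OF degree_add_le_max])
qed

lemma PD_diff: "PD d f \<Longrightarrow> PD d g \<Longrightarrow> PD d (\<lambda>L. f L - g L)"
  unfolding PD_def
proof (elim exE conjE)
  fix a b assume "degree a \<le> d" "\<forall>L. f L = poly a (of_nat L)" "degree b \<le> d" "\<forall>L. g L = poly b (of_nat L)"
  then show "\<exists>\<alpha>. degree \<alpha> \<le> d \<and> (\<forall>L. f L - g L = poly \<alpha> (of_nat L))"
    by (intro exI[of _ "a - b"]) (auto intro: order.trans[OF degree_diff_le_max])
qed

lemma PD_mult: "PD d1 f \<Longrightarrow> PD d2 g \<Longrightarrow> PD (d1 + d2) (\<lambda>L. f L * g L)"
  unfolding PD_def
proof (elim exE conjE)
  fix a b assume "degree a \<le> d1" "\<forall>L. f L = poly a (of_nat L)" "degree b \<le> d2" "\<forall>L. g L = poly b (of_nat L)"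
  then show "\<exists>\<alpha>. degree \<alpha> \<le> d1 + d2 \<and> (\<forall>L. f L * g L = poly \<alpha> (of_nat L))"
    by (intro exI[of _ "a * b"]) (auto intro: order.trans[OF degree_mult_le])
qed

lemma PD_scale: "PD d f \<Longrightarrow> PD d (\<lambda>L. c * f L)"
  using PD_mult[OF PD_const[of 0 c]] by simp

lemma PD_id: "PD 1 (\<lambda>L. of_nat L)"
  unfolding PD_def by (rule exI[of _ "[:0, 1:]"]) simp

lemma PD_pow: "PD k (\<lambda>L. of_nat L ^ k)"
proof (induction k)
  case 0 then show ?case using PD_const[of 0 1] by simp
next
  case (Suc k)
  from PD_mult[OF PD_id Suc] show ?case by simp
qed

lemma PD_sum: "finite A \<Longrightarrow> (\<And>i. i \<in> A \<Longrightarrow> PD d (f i)) \<Longrightarrow> PD d (\<lambda>L. \<Sum>i\<in>A. f i L)"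
proof (induction A rule: finite_induct)
  case empty then show ?case using PD_const[of d 0] by simp
next
  case (insert x F)
  then show ?case using PD_add[of d "f x" "\<lambda>L. \<Sum>i\<in>F. f i L"] by simp
qed

lemma powsum_identity:
  "(of_nat L :: rat) ^ Suc k = (\<Sum>r\<le>k. of_nat (Suc k choose r) * (\<Sum>i<L. of_nat i ^ r))"
proof -
  have "(of_nat L :: rat) ^ Suc k = (\<Sum>i<L. of_nat (Suc i) ^ Suc k - of_nat i ^ Suc k)"
    using sum_lessThan_telescope[of "\<lambda>i. (of_nat i :: rat) ^ Suc k" L] by simp
  also have "\<dots> = (\<Sum>i<L. \<Sum>r\<le>k. of_nat (Suc k choose r) * of_nat i ^ r)"
  proof (rule sum.cong[OF refl])
    fix i
    have "(of_nat (Suc i) :: rat) ^ Suc k = (of_nat i + 1) ^ Suc k" by (simp add: add.commute)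
    also have "\<dots> = (\<Sum>r\<le>Suc k. of_nat (Suc k choose r) * of_nat i ^ r)"
      unfolding binomial_ring[of "of_nat i :: rat" 1 "Suc k"] by (simp only: power_one mult_1_right)
    also have "\<dots> = (\<Sum>r\<le>k. of_nat (Suc k choose r) * of_nat i ^ r) + of_nat i ^ Suc k"
      by (subst sum.atMost_Suc) simp
    finally show "(of_nat (Suc i) :: rat) ^ Suc k - of_nat i ^ Suc k = (\<Sum>r\<le>k. of_nat (Suc k choose r) * of_nat i ^ r)"
      by simp
  qed
  also have "\<dots> = (\<Sum>r\<le>k. of_nat (Suc k choose r) * (\<Sum>i<L. of_nat i ^ r))"
    by (subst sum.swap) (simp add: sum_distrib_left)
  finally show ?thesis .
qed

lemma PD_powsum: "PD (Suc k) (\<lambda>L. \<Sum>i<L. (of_nat i :: rat) ^ k)"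
proof (induction k rule: less_induct)
  case (less k)
  define S where "S = (\<lambda>r L. \<Sum>i<L. (of_nat i :: rat) ^ r)"
  have eq: "S k L = (of_nat L ^ Suc k - (\<Sum>r<k. of_nat (Suc k choose r) * S r L)) / of_nat (Suc k)" for L
  proof -
    have "(of_nat L :: rat) ^ Suc k = (\<Sum>r<k. of_nat (Suc k choose r) * S r L) + of_nat (Suc k) * S k L"
      unfolding powsum_identity S_def by (simp add: lessThan_Suc_atMost[symmetric])
    then show ?thesis by (simp add: field_simps)
  qed
  have "PD (Suc k) (\<lambda>L. (1 / of_nat (Suc k)) * (of_nat L ^ Suc k - (\<Sum>r<k. of_nat (Suc k choose r) * S r L)))"
  proof (rule PD_scale, rule PD_diff)
    show "PD (Suc k) (\<lambda>L. of_nat L ^ Suc k)" by (rule PD_pow)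
    show "PD (Suc k) (\<lambda>L. \<Sum>r<k. of_nat (Suc k choose r) * S r L)"
    proof (rule PD_sum)
      fix r assume "r \<in> {..<k}"
      then have "PD (Suc r) (S r)" using less unfolding S_def by auto
      then show "PD (Suc k) (\<lambda>L. of_nat (Suc k choose r) * S r L)"
      proof -
        have "PD (Suc k) (S r)" using PD_mono[OF \<open>PD (Suc r) (S r)\<close>] \<open>r \<in> {..<k}\<close> by simp
        then show ?thesis by (rule PD_scale)
      qed
    qed simp
  qed
  moreover have "S k = (\<lambda>L. (1 / of_nat (Suc k)) * (of_nat L ^ Suc k - (\<Sum>r<k. of_nat (Suc k choose r) * S r L)))"
    by (rule ext, subst eq, simp)
  ultimately have "PD (Suc k) (S k)" by simp
  then show ?case unfolding S_def .
qed

lemma PD_antidiff: "PD d g \<Longrightarrow> PD (Suc d) (\<lambda>L. \<Sum>i<L. g i)"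
proof -
  assume "PD d g"
  then obtain \<alpha> where da: "degree \<alpha> \<le> d" and g: "\<And>L. g L = poly \<alpha> (of_nat L)" unfolding PD_def by auto
  have "(\<Sum>i<L. g i) = (\<Sum>k\<le>degree \<alpha>. coeff \<alpha> k * (\<Sum>i<L. of_nat i ^ k))" for L
    unfolding g poly_altdef by (subst sum.swap) (simp add: sum_distrib_left)
  moreover have "PD (Suc d) (\<lambda>L. \<Sum>k\<le>degree \<alpha>. coeff \<alpha> k * (\<Sum>i<L. (of_nat i :: rat) ^ k))"
    by (rule PD_sum) (auto intro!: PD_scale PD_mono[OF PD_powsum] simp: order.trans[OF _ da])
  ultimately show ?thesis by simp
qed

lemma PD_recur:
  assumes "\<And>L. w (Suc L) = w L + g L" and "PD d g"
  shows "PD (Suc d) w"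
proof -
  have eqL: "w L = w 0 + (\<Sum>i<L. g i)" for L
    by (induction L) (simp_all add: assms(1))
  have "PD (Suc d) (\<lambda>L. w 0 + (\<Sum>i<L. g i))"
    by (rule PD_add[OF PD_const PD_antidiff[OF assms(2)]])
  then show ?thesis by (rule PD_cong) (rule eqL[symmetric])
qed



definition G :: "int \<Rightarrow> int \<Rightarrow> int \<Rightarrow> int \<Rightarrow> nat \<Rightarrow> int poly poly" where
  "G a b c s L = (\<Prod>i<L. rlin a b (c + s * int i))"

lemma G_Suc: "G a b c s (Suc L) = G a b c s L * rlin a b (c + s * int L)"
  by (simp add: G_def lessThan_Suc mult.commute)

lemma factor_PD:
  assumes a: "a \<noteq> 0"
  shows "PD (2 * e + q) (\<lambda>L. of_int (coeffXZ (G a b c s L) e q) / of_int a ^ L)"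
proof -
  define w where "w = (\<lambda>e q L. (of_int (coeffXZ (G a b c s L) e q) :: rat) / of_int a ^ L)"
  have rec: "w e q (Suc L) = w e q L + ((if q = 0 then 0 else (of_int b / of_int a) * w e (q - 1) L)
      + (if e = 0 then 0 else ((of_int c + of_int s * of_nat L) / of_int a) * w (e - 1) q L))" for e q L
    unfolding w_def G_Suc coeffXZ_rlin using a
    by (simp add: field_simps)
  have lin: "PD 1 (\<lambda>L. (of_int c + of_int s * of_nat L) / (of_int a :: rat))"
  proof -
    have "PD 1 (\<lambda>L. (1 / of_int a) * (of_int c + of_int s * of_nat L) :: rat)"
      by (rule PD_scale, rule PD_add, rule PD_const, rule PD_scale, rule PD_id)
    then show ?thesis by simp
  qed
  have "PD (2 * e + q) (w e q)"
  proof (induction e arbitrary: q)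
    case 0
    show ?case
    proof (induction q)
      case 0
      have c0: "w 0 0 L = w 0 0 0" for L
        by (induction L) (simp_all add: rec)
      have "PD 0 (\<lambda>_. w 0 0 0)" by (rule PD_const)
      then have "PD 0 (w 0 0)" by (rule PD_cong) (rule c0[symmetric])
      then show ?case by simp
    next
      case (Suc q)
      have "PD (Suc (2 * 0 + q)) (w 0 (Suc q))"
      proof (rule PD_recur)
        show "w 0 (Suc q) (Suc L) = w 0 (Suc q) L + (of_int b / of_int a) * w 0 q L" for L
          using rec[of 0 "Suc q" L] by simp
        show "PD (2 * 0 + q) (\<lambda>L. of_int b / of_int a * w 0 q L)"
          by (rule PD_scale) (use Suc in simp)
      qed
      then show ?case by simp
    qed
  next
    case (Suc e)
    note IHe = Suc.IH
    show ?case
    proof (induction q)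
      case 0
      have "PD (Suc (2 * e + 1)) (w (Suc e) 0)"
      proof (rule PD_recur)
        show "w (Suc e) 0 (Suc L) = w (Suc e) 0 L + ((of_int c + of_int s * of_nat L) / of_int a) * w e 0 L" for L
          using rec[of "Suc e" 0 L] by simp
        show "PD (2 * e + 1) (\<lambda>L. ((of_int c + of_int s * of_nat L) / of_int a) * w e 0 L)"
          using PD_mult[OF lin IHe[of 0]] by simp
      qed
      then show ?case by simp
    next
      case (Suc q)
      have "PD (Suc (2 * e + 2 + q)) (w (Suc e) (Suc q))"
      proof (rule PD_recur)
        show "w (Suc e) (Suc q) (Suc L) = w (Suc e) (Suc q) L + ((of_int b / of_int a) * w (Suc e) q L
           + ((of_int c + of_int s * of_nat L) / of_int a) * w e (Suc q) L)" for L
          using rec[of "Suc e" "Suc q" L] by simp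
        show "PD (2 * e + 2 + q) (\<lambda>L. (of_int b / of_int a) * w (Suc e) q L
           + ((of_int c + of_int s * of_nat L) / of_int a) * w e (Suc q) L)"
        proof (rule PD_add)
          show "PD (2 * e + 2 + q) (\<lambda>L. (of_int b / of_int a) * w (Suc e) q L)"
            by (rule PD_scale) (use Suc.IH in simp)
          show "PD (2 * e + 2 + q) (\<lambda>L. ((of_int c + of_int s * of_nat L) / of_int a) * w e (Suc q) L)"
            using PD_mult[OF lin IHe[of "Suc q"]] by simp
        qed
      qed
      then show ?case by simp
    qed
  qed
  then show ?thesis unfolding w_def by simp
qed



definition PDS :: "nat set \<Rightarrow> int \<Rightarrow> (nat \<Rightarrow> rat) \<Rightarrow> bool" where
  "PDS S d f \<longleftrightarrow> (\<exists>\<alpha>. (\<alpha> = 0 \<or> int (degree \<alpha>) \<le> d) \<and> (\<forall>j\<in>S. f j = poly \<alpha> (of_nat j)))"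

lemma PDS_zero: "(\<And>j. j \<in> S \<Longrightarrow> f j = 0) \<Longrightarrow> PDS S d f"
  unfolding PDS_def by (rule exI[of _ 0]) simp

lemma PDS_cong: "PDS S d f \<Longrightarrow> (\<And>j. j \<in> S \<Longrightarrow> f j = g j) \<Longrightarrow> d = d' \<Longrightarrow> PDS S d' g"
  unfolding PDS_def by auto

lemma PDS_mono: "PDS S d f \<Longrightarrow> d \<le> d' \<Longrightarrow> PDS S d' f"
  unfolding PDS_def
proof (elim exE conjE)
  fix a assume "a = 0 \<or> int (degree a) \<le> d" "\<forall>j\<in>S. f j = poly a (of_nat j)" "d \<le> d'"
  then show "\<exists>\<alpha>. (\<alpha> = 0 \<or> int (degree \<alpha>) \<le> d') \<and> (\<forall>j\<in>S. f j = poly \<alpha> (of_nat j))"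
    by (intro exI[of _ a]) auto
qed

lemma PDS_add: "PDS S d f \<Longrightarrow> PDS S d g \<Longrightarrow> PDS S d (\<lambda>j. f j + g j)"
  unfolding PDS_def
proof (elim exE conjE)
  fix a b assume a: "a = 0 \<or> int (degree a) \<le> d" and fa: "\<forall>j\<in>S. f j = poly a (of_nat j)"
    and b: "b = 0 \<or> int (degree b) \<le> d" and gb: "\<forall>j\<in>S. g j = poly b (of_nat j)"
  have "a + b = 0 \<or> int (degree (a + b)) \<le> d"
  proof (cases "a = 0 \<or> b = 0")
    case True then show ?thesis using a b by auto
  next
    case False
    then have "int (degree a) \<le> d" "int (degree b) \<le> d" using a b by auto
    then show ?thesis using degree_add_le_max[of a b] by linarith
  qed
  then show "\<exists>\<alpha>. (\<alpha> = 0 \<or> int (degree \<alpha>) \<le> d) \<and> (\<forall>j\<in>S. f j + g j = poly \<alpha> (of_nat j))"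
    using fa gb by (intro exI[of _ "a + b"]) auto
qed

lemma PDS_mult: "PDS S d1 f \<Longrightarrow> PDS S d2 g \<Longrightarrow> PDS S (d1 + d2) (\<lambda>j. f j * g j)"
  unfolding PDS_def
proof (elim exE conjE)
  fix a b assume a: "a = 0 \<or> int (degree a) \<le> d1" and fa: "\<forall>j\<in>S. f j = poly a (of_nat j)"
    and b: "b = 0 \<or> int (degree b) \<le> d2" and gb: "\<forall>j\<in>S. g j = poly b (of_nat j)"
  have "a * b = 0 \<or> int (degree (a * b)) \<le> d1 + d2"
  proof (cases "a = 0 \<or> b = 0")
    case True then show ?thesis by auto
  next
    case False
    then have "int (degree a) \<le> d1" "int (degree b) \<le> d2" using a b by auto
    then show ?thesis using degree_mult_le[of a b] by linarith
  qed
  then show "\<exists>\<alpha>. (\<alpha> = 0 \<or> int (degree \<alpha>) \<le> d1 + d2) \<and> (\<forall>j\<in>S. f j * g j = poly \<alpha> (of_nat j))"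
    using fa gb by (intro exI[of _ "a * b"]) auto
qed

lemma PDS_sum: "finite A \<Longrightarrow> (\<And>i. i \<in> A \<Longrightarrow> PDS S d (f i)) \<Longrightarrow> PDS S d (\<lambda>j. \<Sum>i\<in>A. f i j)"
proof (induction A rule: finite_induct)
  case empty then show ?case by (intro PDS_zero) simp
next
  case (insert x F)
  then show ?case using PDS_add[of S d "f x" "\<lambda>j. \<Sum>i\<in>F. f i j"] by simp
qed

lemma PDS_const: "0 \<le> d \<Longrightarrow> PDS S d (\<lambda>_. c)"
  unfolding PDS_def by (rule exI[of _ "[:c:]"]) simp

lemma PDS_lin: "PDS S 1 (\<lambda>j. c + k * of_nat j)"
  unfolding PDS_def by (rule exI[of _ "[:c, k:]"]) (simp add: degree_pCons_eq_if)

lemma PDS_of_PD: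
  fixes \<beta> :: "rat poly"
  assumes "PD d u" and "\<And>j. j \<in> S \<Longrightarrow> f j = u (h j)"
    and "\<And>j. j \<in> S \<Longrightarrow> of_nat (h j) = poly \<beta> (of_nat j)" and "degree \<beta> \<le> 1"
  shows "PDS S (int d) f"
proof -
  from assms(1) obtain \<alpha> where da: "degree \<alpha> \<le> d" and u: "\<And>L. u L = poly \<alpha> (of_nat L)"
    unfolding PD_def by auto
  have "degree (pcompose \<alpha> \<beta>) \<le> d"
    using degree_pcompose_le[of \<alpha> \<beta>] assms(4) da
    by (metis le_trans mult.right_neutral mult_le_mono2)
  moreover have "\<forall>j\<in>S. f j = poly (pcompose \<alpha> \<beta>) (of_nat j)"
    using assms(2,3) u by (simp add: poly_pcompose)
  ultimately show ?thesis unfolding PDS_def by (intro exI[of _ "pcompose \<alpha> \<beta>"]) auto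
qed

lemma coeffXZ_mult: "coeffXZ (X * Y) e q = (\<Sum>e1\<le>e. \<Sum>q1\<le>q. coeffXZ X e1 q1 * coeffXZ Y (e - e1) (q - q1))"
  by (simp add: coeffXZ_def coeff_mult coeff_sum)

definition WP :: "nat set \<Rightarrow> (nat \<Rightarrow> int poly poly) \<Rightarrow> (nat \<Rightarrow> rat) \<Rightarrow> int \<Rightarrow> bool" where
  "WP S X w \<delta> \<longleftrightarrow> (\<forall>e q. PDS S (2 * int e + int q + \<delta>) (\<lambda>j. of_int (coeffXZ (X j) e q) / w j))"

lemma WP_mult:
  assumes "WP S X w1 d1" "WP S Y w2 d2"
  shows "WP S (\<lambda>j. X j * Y j) (\<lambda>j. w1 j * w2 j) (d1 + d2)"
  unfolding WP_def
proof (intro allI)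
  fix e q
  have "PDS S (2 * int e + int q + (d1 + d2))
     (\<lambda>j. \<Sum>e1\<le>e. \<Sum>q1\<le>q. (of_int (coeffXZ (X j) e1 q1) / w1 j) * (of_int (coeffXZ (Y j) (e - e1) (q - q1)) / w2 j))"
  proof (intro PDS_sum finite_atMost)
    fix e1 q1 assume "e1 \<in> {..e}" "q1 \<in> {..q}"
    then have eq: "(2 * int e1 + int q1 + d1) + (2 * int (e - e1) + int (q - q1) + d2) = 2 * int e + int q + (d1 + d2)"
      by auto
    show "PDS S (2 * int e + int q + (d1 + d2))
      (\<lambda>j. (of_int (coeffXZ (X j) e1 q1) / w1 j) * (of_int (coeffXZ (Y j) (e - e1) (q - q1)) / w2 j))"
      using PDS_mult[OF assms(1)[unfolded WP_def, rule_format, of e1 q1] assms(2)[unfolded WP_def, rule_format, of "e - e1" "q - q1"]]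
      unfolding eq .
  qed
  then show "PDS S (2 * int e + int q + (d1 + d2)) (\<lambda>j. of_int (coeffXZ (X j * Y j) e q) / (w1 j * w2 j))"
    by (rule PDS_cong) (simp_all add: coeffXZ_mult sum_divide_distrib)
qed



lemma cst_add: "cst (a + b) = cst a + cst b" by (simp add: cst_def)
lemma cst_diff: "cst (a - b) = cst a - cst b" by (simp add: cst_def)
lemma cst_uminus: "cst (- a) = - cst a" by (simp add: cst_def)
lemma cst_0: "cst 0 = 0" by (simp add: cst_def)
lemma cst_1: "cst 1 = 1" by (simp add: cst_def one_pCons)
lemma of_nat_cst: "(of_nat i :: int poly poly) = cst (int i)"
  by (induction i) (simp_all add: cst_0 cst_add cst_1 add.commute)

lemma poch_lin: "pochhammer (lin a b c) L = (\<Prod>i<L. lin a b (c + int i))"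
  by (simp add: pochhammer_prod atLeast0LessThan lin_def cst_add of_nat_cst add.assoc)

lemma prodA10_lin:
  "prodA10 n m j = (\<Prod>i<j - 1. lin 2 1 (m + 1 + int i)) * (\<Prod>i<j - 1. lin 1 2 (2 - int j + int i))
     * (\<Prod>i<2 * n - 2 * j - 2. lin 1 (-1) (m + 2 * int j + 2 + int i)) * lin 0 (-3) (m + 3 * int j)"
proof -
  have 1: "cst 2 * varX + cst m + varZ + cst 1 = lin 2 1 (m + 1)"
    by (simp add: lin_def cst_add cst_1 algebra_simps)
  have 2: "varX + cst 2 * varZ - cst (int j) + cst 2 = lin 1 2 (2 - int j)"
    by (simp add: lin_def cst_add cst_diff cst_1 algebra_simps)
  have 3: "varX + cst m + cst (2 * int j) - varZ + cst 2 = lin 1 (-1) (m + 2 * int j + 2)"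
    by (simp add: lin_def cst_add cst_uminus cst_1 algebra_simps)
  have 4: "cst m + cst (3 * int j) - cst 3 * varZ = lin 0 (-3) (m + 3 * int j)"
    by (simp add: lin_def cst_add cst_uminus cst_0 algebra_simps)
  show ?thesis unfolding prodA10_def 1 2 3 4 poch_lin ..
qed

definition XA :: "int \<Rightarrow> nat \<Rightarrow> int poly poly" where "XA m j = G 2 1 (m + 1) 1 (j - 1)"
definition XB :: "nat \<Rightarrow> int poly poly" where "XB j = G 1 2 0 (-1) (j - 1)"
definition XC :: "nat \<Rightarrow> int \<Rightarrow> nat \<Rightarrow> int poly poly" where "XC n m j = G 1 (-1) (m + 2 * int n - 1) (-1) (2 * n - 2 * j - 2)"
definition XD :: "int \<Rightarrow> nat \<Rightarrow> int poly poly" where "XD m j = rlin 0 (-3) (m + 3 * int j)"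

lemma link:
  assumes "1 \<le> j" "j \<le> n - 1" "p + q \<le> 2 * n - 3"
  shows "coeffXZ (prodA10 n m j) p q = coeffXZ (XA m j * XB j * XC n m j * XD m j) (2 * n - 3 - p - q) q"
proof -
  note r1 = revpair_prod[OF revpair_one, of "j - 1" 2 1 "\<lambda>i. m + 1 + int i"]
  note r2 = revpair_prod[OF r1, of "j - 1" 1 2 "\<lambda>i. 2 - int j + int i"]
  note r3 = revpair_prod[OF r2, of "2 * n - 2 * j - 2" 1 "-1" "\<lambda>i. m + 2 * int j + 2 + int i"]
  note r4 = revpair_step[OF r3, of 0 "-3" "m + 3 * int j"]
  have K: "Suc (0 + (j - 1) + (j - 1) + (2 * n - 2 * j - 2)) = 2 * n - 3" using assms by arith
  have RA: "(\<Prod>i<j - 1. rlin 2 1 (m + 1 + int i)) = XA m j"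
    by (simp add: XA_def G_def)
  have RB: "(\<Prod>i<j - 1. rlin 1 2 (2 - int j + int i)) = XB j"
  proof -
    have "(\<Prod>i<j - 1. rlin 1 2 (2 - int j + int i)) = (\<Prod>i<j - 1. rlin 1 2 (2 - int j + int (j - 1 - Suc i)))"
      by (rule prod.nat_diff_reindex[symmetric])
    also have "\<dots> = (\<Prod>i<j - 1. rlin 1 2 (0 + (-1) * int i))"
    proof (rule prod.cong[OF refl])
      fix i assume "i \<in> {..<j - 1}"
      then have "2 - int j + int (j - 1 - Suc i) = 0 + (-1) * int i" by auto
      then show "rlin 1 2 (2 - int j + int (j - 1 - Suc i)) = rlin 1 2 (0 + (-1) * int i)" by (simp only:)
    qed
    finally show ?thesis by (simp add: XB_def G_def)
  qed
  have RC: "(\<Prod>i<2 * n - 2 * j - 2. rlin 1 (-1) (m + 2 * int j + 2 + int i)) = XC n m j"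
  proof -
    have "(\<Prod>i<2 * n - 2 * j - 2. rlin 1 (-1) (m + 2 * int j + 2 + int i))
        = (\<Prod>i<2 * n - 2 * j - 2. rlin 1 (-1) (m + 2 * int j + 2 + int (2 * n - 2 * j - 2 - Suc i)))"
      by (rule prod.nat_diff_reindex[symmetric])
    also have "\<dots> = (\<Prod>i<2 * n - 2 * j - 2. rlin 1 (-1) (m + 2 * int n - 1 + (-1) * int i))"
    proof (rule prod.cong[OF refl])
      fix i assume "i \<in> {..<2 * n - 2 * j - 2}"
      then have "m + 2 * int j + 2 + int (2 * n - 2 * j - 2 - Suc i) = m + 2 * int n - 1 + (-1) * int i" by auto
      then show "rlin 1 (-1) (m + 2 * int j + 2 + int (2 * n - 2 * j - 2 - Suc i)) = rlin 1 (-1) (m + 2 * int n - 1 + (-1) * int i)" by (simp only:)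
    qed
    finally show ?thesis by (simp add: XC_def G_def)
  qed
  have "revpair (2 * n - 3) (prodA10 n m j) (XA m j * XB j * XC n m j * XD m j)"
    using r4 unfolding K RA RB RC prodA10_lin XD_def by simp
  then show ?thesis using assms(3) unfolding revpair_def by auto
qed

lemma coeffXZ_rlin1: "coeffXZ (rlin a b c) e q = (if e = 0 \<and> q = 0 then a else if e = 0 \<and> q = 1 then b else if e = 1 \<and> q = 0 then c else 0)"
  using coeffXZ_rlin[of 1 a b c e q] by (auto simp: coeffXZ_one)



lemma WA: "WP {1..n - 1} (XA m) (\<lambda>j. 2 ^ (j - 1)) 0"
  unfolding WP_def
proof (intro allI)
  fix e q :: nat
  have "PDS {1..n - 1} (int (2 * e + q)) (\<lambda>j. of_int (coeffXZ (XA m j) e q) / 2 ^ (j - 1))"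
  proof (rule PDS_of_PD[OF factor_PD[of 2 e q 1 "m + 1" 1], where h = "\<lambda>j. j - 1" and \<beta> = "[:-1, 1:]"])
    show "of_int (coeffXZ (XA m j) e q) / 2 ^ (j - 1) = of_int (coeffXZ (G 2 1 (m + 1) 1 (j - 1)) e q) / of_int 2 ^ (j - 1)"
      if "j \<in> {1..n - 1}" for j by (simp add: XA_def)
    show "of_nat (j - 1) = poly [:-1, 1:] (of_nat j :: rat)" if "j \<in> {1..n - 1}" for j
      using that by (simp add: of_nat_diff)
  qed simp_all
  then show "PDS {1..n - 1} (2 * int e + int q + 0) (\<lambda>j. of_int (coeffXZ (XA m j) e q) / 2 ^ (j - 1))"
    by (rule PDS_cong) auto
qed

lemma WB: "WP {1..n - 1} XB (\<lambda>j. 1) 0"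
  unfolding WP_def
proof (intro allI)
  fix e q :: nat
  have "PDS {1..n - 1} (int (2 * e + q)) (\<lambda>j. of_int (coeffXZ (XB j) e q) / 1)"
  proof (rule PDS_of_PD[OF factor_PD[of 1 e q 2 0 "-1"], where h = "\<lambda>j. j - 1" and \<beta> = "[:-1, 1:]"])
    show "of_int (coeffXZ (XB j) e q) / 1 = of_int (coeffXZ (G 1 2 0 (-1) (j - 1)) e q) / of_int 1 ^ (j - 1)"
      if "j \<in> {1..n - 1}" for j by (simp add: XB_def)
    show "of_nat (j - 1) = poly [:-1, 1:] (of_nat j :: rat)" if "j \<in> {1..n - 1}" for j
      using that by (simp add: of_nat_diff)
  qed simp_all
  then show "PDS {1..n - 1} (2 * int e + int q + 0) (\<lambda>j. of_int (coeffXZ (XB j) e q) / 1)"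
    by (rule PDS_cong) auto
qed

lemma WC: "WP {1..n - 1} (XC n m) (\<lambda>j. 1) 0"
  unfolding WP_def
proof (intro allI)
  fix e q :: nat
  have "PDS {1..n - 1} (int (2 * e + q)) (\<lambda>j. of_int (coeffXZ (XC n m j) e q) / 1)"
  proof (rule PDS_of_PD[OF factor_PD[of 1 e q "-1" "m + 2 * int n - 1" "-1"], where h = "\<lambda>j. 2 * n - 2 * j - 2"
        and \<beta> = "[:2 * of_nat n - 2, -2:]"])
    show "of_int (coeffXZ (XC n m j) e q) / 1 = of_int (coeffXZ (G 1 (-1) (m + 2 * int n - 1) (-1) (2 * n - 2 * j - 2)) e q) / of_int 1 ^ (2 * n - 2 * j - 2)"
      if "j \<in> {1..n - 1}" for j by (simp add: XC_def)
    show "of_nat (2 * n - 2 * j - 2) = poly [:2 * of_nat n - 2, -2:] (of_nat j :: rat)" if "j \<in> {1..n - 1}" for j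
    proof -
      have "2 * j + 2 \<le> 2 * n" using that by auto
      then have "of_nat (2 * n - 2 * j - 2) = (of_nat (2 * n) - of_nat (2 * j + 2) :: rat)"
        by (simp add: of_nat_diff)
      then show ?thesis by simp
    qed
  qed simp_all
  then show "PDS {1..n - 1} (2 * int e + int q + 0) (\<lambda>j. of_int (coeffXZ (XC n m j) e q) / 1)"
    by (rule PDS_cong) auto
qed

lemma WD: "WP S (XD m) (\<lambda>j. 1) (-1)"
  unfolding WP_def
proof (intro allI)
  fix e q :: nat
  consider "e = 0 \<and> q = 1" | "e = 1 \<and> q = 0" | "\<not> (e = 0 \<and> q = 1) \<and> \<not> (e = 1 \<and> q = 0)" by blast
  then show "PDS S (2 * int e + int q + -1) (\<lambda>j. of_int (coeffXZ (XD m j) e q) / 1)"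
  proof cases
    case 1
    then show ?thesis by (simp add: XD_def coeffXZ_rlin1 PDS_const)
  next
    case 2
    have "PDS S 1 (\<lambda>j. of_int m + 3 * of_nat j)" by (rule PDS_lin)
    then show ?thesis by (rule PDS_cong) (use 2 in \<open>simp_all add: XD_def coeffXZ_rlin1\<close>)
  next
    case 3
    then show ?thesis by (intro PDS_zero) (auto simp: XD_def coeffXZ_rlin1)
  qed
qed

lemma Wtot: "WP {1..n - 1} (\<lambda>j. XA m j * XB j * XC n m j * XD m j) (\<lambda>j. 2 ^ (j - 1) * 1 * 1 * 1) (0 + 0 + 0 + -1)"
proof -
  have 1: "WP {1..n - 1} (\<lambda>j. XA m j * XB j) (\<lambda>j. 2 ^ (j - 1) * 1) (0 + 0)"
    by (rule WP_mult[where X = "XA m" and Y = XB]) (rule WA, rule WB)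
  have 2: "WP {1..n - 1} (\<lambda>j. XA m j * XB j * XC n m j) (\<lambda>j. 2 ^ (j - 1) * 1 * 1) (0 + 0 + 0)"
    by (rule WP_mult[where X = "\<lambda>j. XA m j * XB j" and Y = "XC n m"])  (rule 1, rule WC)
  show ?thesis
    by (rule WP_mult[where X = "\<lambda>j. XA m j * XB j * XC n m j" and Y = "XD m"])  (rule 2, rule WD)
qed

theorem lemmaA10:
  fixes n p q :: nat and m :: int
  assumes "n \<ge> 2" and "m \<ge> 0"
    and "p \<le> 2 * n - 4" and "q \<le> 2 * n - 3" and "p + q \<le> 2 * n - 3"
  shows "\<exists>\<alpha> :: rat poly.
     (if 2 * (2 * int n - 3 - int p - int q) + int q - 1 < 0 then \<alpha> = 0
      else int (degree \<alpha>) \<le> 2 * (2 * int n - 3 - int p - int q) + int q - 1)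
   \<and> (\<forall>j::nat. 1 \<le> j \<and> j \<le> n - 1 \<longrightarrow>
        of_int (coeffXZ (prodA10 n m j) p q) = 2 ^ j * poly \<alpha> (of_nat j))"
proof -
  define e where "e = 2 * n - 3 - p - q"
  have ie: "int e = 2 * int n - 3 - int p - int q" using assms unfolding e_def by arith
  have P: "PDS {1..n - 1} (2 * int e + int q + (0 + 0 + 0 + -1))
     (\<lambda>j. of_int (coeffXZ (XA m j * XB j * XC n m j * XD m j) e q) / (2 ^ (j - 1) * 1 * 1 * 1))"
    using Wtot[of n m] unfolding WP_def by blast
  then obtain \<alpha> where a0: "\<alpha> = 0 \<or> int (degree \<alpha>) \<le> 2 * int e + int q + (0 + 0 + 0 + -1)"
    and ha0: "\<forall>j\<in>{1..n - 1}. of_int (coeffXZ (XA m j * XB j * XC n m j * XD m j) e q) / (2 ^ (j - 1) * 1 * 1 * 1 :: rat)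
        = poly \<alpha> (of_nat j)"
    unfolding PDS_def by blast
  have ha: "of_int (coeffXZ (XA m j * XB j * XC n m j * XD m j) e q) = (2::rat) ^ (j - 1) * poly \<alpha> (of_nat j)"
    if "j \<in> {1..n - 1}" for j
  proof -
    have "of_int (coeffXZ (XA m j * XB j * XC n m j * XD m j) e q) / (2::rat) ^ (j - 1) = poly \<alpha> (of_nat j)"
      using ha0 that by simp
    then show ?thesis by (simp add: divide_eq_eq)
  qed
  define D where "D = 2 * (2 * int n - 3 - int p - int q) + int q - 1"
  have DD: "D = 2 * int e + int q + (0 + 0 + 0 + -1)" unfolding D_def ie by simp
  show ?thesis unfolding D_def[symmetric]
  proof (intro exI[of _ "smult (1/2) \<alpha>"] conjI allI impI)
    have a1: "\<alpha> = 0 \<or> int (degree \<alpha>) \<le> D" using a0 unfolding DD .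
    show "if D < 0 then smult (1/2) \<alpha> = 0 else int (degree (smult (1/2) \<alpha>)) \<le> D"
    proof (cases "D < 0")
      case True
      then have "\<alpha> = 0" using a1 by linarith
      then show ?thesis using True by simp
    next
      case False
      then show ?thesis using a1 by auto
    qed
  next
    fix j :: nat assume j: "1 \<le> j \<and> j \<le> n - 1"
    have c: "coeffXZ (prodA10 n m j) p q = coeffXZ (XA m j * XB j * XC n m j * XD m j) e q"
      unfolding e_def using j assms by (intro link) auto
    have "of_int (coeffXZ (prodA10 n m j) p q) = (2 :: rat) ^ (j - 1) * poly \<alpha> (of_nat j)"
      using ha[of j] j unfolding c by simp
    also have "\<dots> = 2 ^ j * poly (smult (1/2) \<alpha>) (of_nat j)"
      using j by (cases j) simp_all
    finally show "of_int (coeffXZ (prodA10 n m j) p q) = 2 ^ j * poly (smult (1/2) \<alpha>) (of_nat j)" .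
  qed
qed

end
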